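(* Let $k$ be a commutative ring and $A$ a commutative $k$-algebra. If the homomorphism of graded $A$-algebras $\theta_{A/k}:\operatorname{gr}\operatorname{Diff}_{A/k}\to(\operatorname{Sym}\Omega_{A/k})^*_{gr}$ is surjective (hence an isomorphism), then $\operatorname{Ider}_k(A)=\operatorname{Der}_k(A)$.
   Context: $\operatorname{Diff}^{(n)}_{A/k}$: $k$-linear differential operators of order $\le n$ (order $0$ = multiplications by elements of $A$; $\varphi$ has order $\le i+1$ iff $[\varphi,a]=\varphi\circ a-a\circ\varphi$ has order $\le i$ for all $a$); $\operatorname{gr}\operatorname{Diff}_{A/k}$ is the associated graded commutative $A$-algebra, $\sigma_n$ the symbol. $(\operatorname{Sym}\Omega_{A/k})^*_{gr}=\bigoplus_n\operatorname{Hom}_A(\operatorname{Sym}^n\Omega_{A/k},A)$ with the shuffle product. $\theta_{A/k}=\bigoplus_n\theta_n$, where for $P\in\operatorname{Diff}^{(n)}_{A/k}$, $\theta_n(\sigma_n(P))$ is the $A$-linear form on $\operatorname{Sym}^n\Omega_{A/k}$ with $dx_1\cdots dx_n\mapsto\sum_{L\subset[n]}(-1)^{\sharp L}x_LP(x_{[n]\setminus L})$ ($x_L=\prod_{i\in L}x_i$); it is a well-defined injective homomorphism of graded $A$-algebras. $\operatorname{Ider}_k(A)$ is the set of $\delta\in\operatorname{Der}_k(A)$ for which there is an infinite sequence $(D_0=\mathrm{Id},D_1=\delta,D_2,\dots)$ of $k$-linear maps $A\to A$ with $D_i(xy)=\sum_{r+s=i}D_r(x)D_s(y)$ (a Hasse–Schmidt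 derivation). *)

theory Defs
  imports Main "HOL-Library.Multiset"
begin

text \<open>A commutative k-algebra A: a commutative ring A (type 'a) together with
  its structure map phi : k -> A, a unital ring homomorphism from the commutative ring k.\<close>

definition alg_struct :: "('k::comm_ring_1 \<Rightarrow> 'a::comm_ring_1) \<Rightarrow> bool" where
  "alg_struct phi \<longleftrightarrow> phi 1 = 1 \<and> (\<forall>c d. phi (c + d) = phi c + phi d)
      \<and> (\<forall>c d. phi (c * d) = phi c * phi d)"

definition klin :: "('k::comm_ring_1 \<Rightarrow> 'a::comm_ring_1) \<Rightarrow> ('a \<Rightarrow> 'a) \<Rightarrow> bool" where
  "klin phi D \<longleftrightarrow> (\<forall>x y. D (x + y) = D x + D y) \<and> (\<forall>c x. D (phi c * x) = phi c * D x)"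

fun diffop :: "('k::comm_ring_1 \<Rightarrow> 'a::comm_ring_1) \<Rightarrow> nat \<Rightarrow> ('a \<Rightarrow> 'a) \<Rightarrow> bool" where
  "diffop phi 0 P \<longleftrightarrow> (\<exists>a. P = (\<lambda>x. a * x))"
| "diffop phi (Suc n) P \<longleftrightarrow> klin phi P \<and> (\<forall>a. diffop phi n (\<lambda>x. P (a * x) - a * P x))"

definition kder :: "('k::comm_ring_1 \<Rightarrow> 'a::comm_ring_1) \<Rightarrow> ('a \<Rightarrow> 'a) \<Rightarrow> bool" where
  "kder phi D \<longleftrightarrow> klin phi D \<and> (\<forall>x y. D (x * y) = x * D y + y * D x)"

definition ider :: "('k::comm_ring_1 \<Rightarrow> 'a::comm_ring_1) \<Rightarrow> ('a \<Rightarrow> 'a) \<Rightarrow> bool" where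
  "ider phi \<delta> \<longleftrightarrow> kder phi \<delta> \<and>
     (\<exists>D :: nat \<Rightarrow> 'a \<Rightarrow> 'a. D 0 = id \<and> D 1 = \<delta> \<and> (\<forall>i. klin phi (D i)) \<and>
        (\<forall>i x y. D i (x * y) = (\<Sum>r\<le>i. D r x * D (i - r) y)))"

text \<open>A-linear forms on Sym^n Omega_{A/k}, described through the universal property of
  Kaehler differentials and of the symmetric power: a form l corresponds to the map
  (x_1,...,x_n) |-> l(dx_1 ... dx_n), which is a symmetric map A^n -> A that is a
  k-derivation in each argument (and every such map arises from a unique form).\<close>
definition sym_multider :: "('k::comm_ring_1 \<Rightarrow> 'a::comm_ring_1) \<Rightarrow> nat \<Rightarrow> ('a list \<Rightarrow> 'a) \<Rightarrow> bool" where
  "sym_multider phi n f \<longleftrightarrow>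
     (\<forall>xs ys. length xs = n \<longrightarrow> mset ys = mset xs \<longrightarrow> f ys = f xs) \<and>
     (\<forall>xs i. length xs = n \<longrightarrow> i < n \<longrightarrow> kder phi (\<lambda>y. f (xs[i := y])))"

text \<open>theta_n(sigma_n(P)) evaluated on dx_1 ... dx_n.\<close>
definition theta_val :: "('a::comm_ring_1 \<Rightarrow> 'a) \<Rightarrow> 'a list \<Rightarrow> 'a" where
  "theta_val P xs = (\<Sum>L\<in>Pow {0..<length xs}.
      (-1) ^ card L * (\<Prod>i\<in>L. xs ! i) * P (\<Prod>i\<in>{0..<length xs} - L. xs ! i))"

text \<open>Surjectivity of theta_{A/k} (degreewise): every A-linear form on Sym^n Omega
  is theta_n(sigma_n(P)) for some differential operator P of order at most n.\<close>
definition theta_surj :: "('k::comm_ring_1 \<Rightarrow> 'a::comm_ring_1) \<Rightarrow> bool" where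
  "theta_surj phi \<longleftrightarrow> (\<forall>n f. sym_multider phi n f \<longrightarrow>
      (\<exists>P. diffop phi n P \<and> (\<forall>xs. length xs = n \<longrightarrow> theta_val P xs = f xs)))"

end

theory Submission
  imports Defs "HOL-Combinatorics.List_Permutation" "HOL-Computational_Algebra.Formal_Power_Series"
begin

lemma diffop0_iff: "diffop phi 0 P \<longleftrightarrow> (\<exists>a. \<forall>x. P x = a * x)"
  by (auto simp: fun_eq_iff)

declare diffop.simps(1)[simp del]

lemma klin_mult: "klin phi (\<lambda>x. a * x)"
  by (simp add: klin_def algebra_simps)

lemma diffop_klin: "diffop phi n P \<Longrightarrow> klin phi P"
  by (cases n) (auto simp: diffop0_iff klin_def algebra_simps)

lemma diffop_mono1: "diffop phi n P \<Longrightarrow> diffop phi (Suc n) P"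
proof (induction n arbitrary: P)
  case 0
  then obtain a where "\<And>x. P x = a * x" by (auto simp: diffop0_iff)
  then show ?case by (auto simp: klin_def algebra_simps diffop0_iff intro: exI[of _ 0])
next
  case (Suc n)
  then show ?case by auto
qed

lemma diffop_mono: "diffop phi n P \<Longrightarrow> n \<le> m \<Longrightarrow> diffop phi m P"
proof (induction m)
  case 0 then show ?case by simp
next
  case (Suc m) then show ?case by (metis diffop_mono1 le_Suc_eq)
qed

lemma diffop_cong: "diffop phi n P \<Longrightarrow> (\<And>x. P x = Q x) \<Longrightarrow> diffop phi n Q"
proof -
  assume "diffop phi n P" "\<And>x. P x = Q x"
  then have "P = Q" by auto
  with \<open>diffop phi n P\<close> show ?thesis by simp
qed

lemma klin_add: "klin phi P \<Longrightarrow> klin phi Q \<Longrightarrow> klin phi (\<lambda>x. P x + Q x)"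
  by (simp add: klin_def algebra_simps)
lemma klin_diff: "klin phi P \<Longrightarrow> klin phi Q \<Longrightarrow> klin phi (\<lambda>x. P x - Q x)"
  by (simp add: klin_def algebra_simps)
lemma klin_cmul: "klin phi P \<Longrightarrow> klin phi (\<lambda>x. c * P x)"
  by (simp add: klin_def algebra_simps)

lemma diffop_add: "diffop phi n P \<Longrightarrow> diffop phi n Q \<Longrightarrow> diffop phi n (\<lambda>x. P x + Q x)"
proof (induction n arbitrary: P Q)
  case 0
  then obtain a b where "\<And>x. P x = a * x" "\<And>x. Q x = b * x" by (auto simp: diffop0_iff)
  then show ?case by (auto intro: exI[of _ "a+b"] simp: algebra_simps diffop0_iff)
next
  case (Suc n)
  show ?case
  proof (simp, intro conjI allI)
    show "klin phi (\<lambda>x. P x + Q x)" using Suc.prems by (simp add: klin_add)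
    fix a
    have "diffop phi n (\<lambda>x. (P (a * x) - a * P x) + (Q (a * x) - a * Q x))"
      using Suc by simp
    then show "diffop phi n (\<lambda>x. P (a * x) + Q (a * x) - a * (P x + Q x))"
      by (rule diffop_cong) (simp add: algebra_simps)
  qed
qed

lemma diffop_cmul: "diffop phi n P \<Longrightarrow> diffop phi n (\<lambda>x. c * P x)"
proof (induction n arbitrary: P)
  case 0
  then obtain a where "\<And>x. P x = a * x" by (auto simp: diffop0_iff)
  then show ?case by (auto intro: exI[of _ "c*a"] simp: algebra_simps diffop0_iff)
next
  case (Suc n)
  show ?case
  proof (simp, intro conjI allI)
    show "klin phi (\<lambda>x. c * P x)" using Suc.prems by (simp add: klin_cmul)
    fix a
    have "diffop phi n (\<lambda>x. c * (P (a * x) - a * P x))"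
      using Suc by simp
    then show "diffop phi n (\<lambda>x. c * P (a * x) - a * (c * P x))"
      by (rule diffop_cong) (simp add: algebra_simps)
  qed
qed

lemma diffop_neg: "diffop phi n P \<Longrightarrow> diffop phi n (\<lambda>x. - P x)"
  using diffop_cmul[of phi n P "-1"] by simp

lemma diffop_diff: "diffop phi n P \<Longrightarrow> diffop phi n Q \<Longrightarrow> diffop phi n (\<lambda>x. P x - Q x)"
  using diffop_add[of phi n P "\<lambda>x. - Q x"] diffop_neg[of phi n Q] by simp

lemma diffop_mult: "diffop phi n (\<lambda>x. a * x)"
  using diffop_mono[of phi 0 "\<lambda>x. a * x" n] by (auto simp: diffop0_iff)

lemma diffop_sum: "finite S \<Longrightarrow> (\<And>r. r \<in> S \<Longrightarrow> diffop phi n (G r)) \<Longrightarrow>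
   diffop phi n (\<lambda>y. \<Sum>r\<in>S. G r y)"
proof (induction S rule: finite_induct)
  case empty
  then show ?case using diffop_mult[of phi n 0] by simp
next
  case (insert x F)
  then show ?case using diffop_add[of phi n "G x"] by simp
qed

lemma diffop_comm: "diffop phi (Suc n) P \<Longrightarrow> diffop phi n (\<lambda>x. P (a * x) - a * P x)"
  by simp


lemma theta_nil: "theta_val P [] = P 1"
  by (simp add: theta_val_def)

lemma theta_snoc: "theta_val P (ys @ [z]) = theta_val (\<lambda>y. P (z*y) - z * P y) ys"
proof -
  let ?n = "length ys"
  let ?x = "ys @ [z]"
  define T where "T L = (-1)^card L * (\<Prod>i\<in>L. ?x!i) * P (\<Prod>i\<in>{0..<Suc ?n} - L. ?x!i)" for L
  have "theta_val P ?x = (\<Sum>L\<in>Pow {0..<Suc ?n}. T L)" by (simp add: theta_val_def T_def)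
  also have "Pow {0..<Suc ?n} = Pow {0..<?n} \<union> insert ?n ` Pow {0..<?n}"
    by (simp add: atLeast0_lessThan_Suc Pow_insert)
  also have "sum T \<dots> = sum T (Pow {0..<?n}) + sum T (insert ?n ` Pow {0..<?n})"
    by (rule sum.union_disjoint) auto
  also have "sum T (insert ?n ` Pow {0..<?n}) = sum (T \<circ> insert ?n) (Pow {0..<?n})"
    by (rule sum.reindex, rule inj_onI) (metis PowD atLeastLessThan_iff insert_ident less_irrefl subsetD)
  also have "sum T (Pow {0..<?n}) + sum (T \<circ> insert ?n) (Pow {0..<?n})
      = (\<Sum>L\<in>Pow {0..<?n}. T L + T (insert ?n L))" by (simp add: sum.distrib)
  also have "\<dots> = theta_val (\<lambda>y. P (z*y) - z * P y) ys"
    unfolding theta_val_def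
  proof (rule sum.cong)
    fix L assume L: "L \<in> Pow {0..<?n}"
    then have fin: "finite L" and nL: "?n \<notin> L" by (auto intro: finite_subset)
    have p1: "(\<Prod>i\<in>L. ?x!i) = (\<Prod>i\<in>L. ys!i)"
      by (rule prod.cong) (use L in \<open>auto simp: nth_append\<close>)
    have p2: "(\<Prod>i\<in>{0..<?n} - L. ?x!i) = (\<Prod>i\<in>{0..<?n} - L. ys!i)"
      by (rule prod.cong) (auto simp: nth_append)
    have c1: "{0..<Suc ?n} - L = insert ?n ({0..<?n} - L)" using L by auto
    have c2: "{0..<Suc ?n} - insert ?n L = {0..<?n} - L" by auto
    have "T L = (-1)^card L * (\<Prod>i\<in>L. ys!i) * P (z * (\<Prod>i\<in>{0..<?n} - L. ys!i))"
      unfolding T_def c1 using p1 p2 by simp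
    moreover have "T (insert ?n L) = - ((-1)^card L * (z * (\<Prod>i\<in>L. ys!i)) * P (\<Prod>i\<in>{0..<?n} - L. ys!i))"
      unfolding T_def c2 using p1 p2 fin nL by simp
    ultimately show "T L + T (insert ?n L) = (-1)^card L * (\<Prod>i\<in>L. ys!i) *
        (P (z * (\<Prod>i\<in>{0..<length ys} - L. ys!i)) - z * P (\<Prod>i\<in>{0..<length ys} - L. ys!i))"
      by (simp add: algebra_simps)
  qed simp
  finally show ?thesis .
qed

lemma theta_add: "theta_val (\<lambda>x. P x + Q x) xs = theta_val P xs + theta_val Q xs"
  by (simp add: theta_val_def sum.distrib[symmetric] algebra_simps)
lemma theta_diff: "theta_val (\<lambda>x. P x - Q x) xs = theta_val P xs - theta_val Q xs"
  by (simp add: theta_val_def sum_subtractf[symmetric] algebra_simps)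
lemma theta_cmul: "theta_val (\<lambda>x. c * P x) xs = c * theta_val P xs"
  by (simp add: theta_val_def sum_distrib_left algebra_simps)

lemma theta_perm:
  assumes "mset xs = mset ys"
  shows "theta_val P xs = theta_val P ys"
proof -
  have len: "length xs = length ys" using assms mset_eq_length by blast
  let ?n = "length ys"
  obtain f where bij: "bij_betw f {..<length xs} {..<length ys}" and fx: "\<forall>i<length xs. xs ! i = ys ! (f i)"
    using permutation_Ex_bij[OF assms] by blast
  have bij': "bij_betw f {0..<?n} {0..<?n}" using bij len by (simp add: atLeast0LessThan)
  define g where "g L = (-1)^card L * (\<Prod>i\<in>L. ys!i) * P (\<Prod>i\<in>{0..<?n} - L. ys!i)" for L
  have "theta_val P ys = sum g (Pow {0..<?n})" by (simp add: theta_val_def g_def)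
  also have "\<dots> = (\<Sum>L\<in>Pow {0..<?n}. g (f ` L))"
    by (rule sum.reindex_bij_betw[symmetric]) (rule bij_betw_image_Pow[OF bij'])
  also have "\<dots> = theta_val P xs"
    unfolding theta_val_def len
  proof (rule sum.cong)
    fix L assume L: "L \<in> Pow {0..<?n}"
    have inj: "inj_on f {0..<?n}" using bij' bij_betw_imp_inj_on by blast
    then have injL: "inj_on f L" using L inj_on_subset by blast
    have cd: "card (f ` L) = card L" using injL card_image by blast
    have pr: "(\<Prod>i\<in>f ` L. ys!i) = (\<Prod>i\<in>L. xs!i)"
      using prod.reindex[OF injL, of "\<lambda>i. ys!i"] fx L len by (auto intro!: prod.cong)
    have im: "{0..<?n} - f ` L = f ` ({0..<?n} - L)"
      using bij' L inj by (auto simp: bij_betw_def inj_on_image_set_diff)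
    have injC: "inj_on f ({0..<?n} - L)" using inj inj_on_subset by blast
    have pr2: "(\<Prod>i\<in>{0..<?n} - f ` L. ys!i) = (\<Prod>i\<in>{0..<?n} - L. xs!i)"
      unfolding im using prod.reindex[OF injC, of "\<lambda>i. ys!i"] fx len by (auto intro!: prod.cong)
    show "g (f ` L) = (-1)^card L * (\<Prod>i\<in>L. xs!i) * P (\<Prod>i\<in>{0..<?n} - L. xs!i)"
      unfolding g_def cd pr pr2 ..
  qed simp
  finally show ?thesis by simp
qed

lemma theta_F1: "diffop phi n P \<Longrightarrow> length xs = Suc n \<Longrightarrow> theta_val P xs = 0"
proof (induction n arbitrary: P xs)
  case 0
  then obtain a where a: "\<And>x. P x = a * x" by (auto simp: diffop0_iff)
  from 0 obtain z where "xs = [z]" by (cases xs) auto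
  have "theta_val P xs = P (z*1) - z * P 1" using theta_snoc[of P "[]" z] \<open>xs = [z]\<close> by (simp add: theta_nil)
  also have "\<dots> = 0" by (simp add: a)
  finally show ?case .
next
  case (Suc n)
  obtain ys z where xs: "xs = ys @ [z]" using Suc.prems(2) by (cases xs rule: rev_cases) auto
  have "diffop phi n (\<lambda>y. P (z*y) - z * P y)" using Suc.prems(1) by simp
  then show ?case using Suc.IH Suc.prems(2) xs by (simp add: theta_snoc)
qed

lemma theta_F1': "diffop phi n P \<Longrightarrow> n < length xs \<Longrightarrow> theta_val P xs = 0"
  using theta_F1[of phi "length xs - 1" P xs] diffop_mono[of phi n P "length xs - 1"] by simp

lemma theta_F2: "diffop phi (Suc j) P \<Longrightarrow> (\<forall>ys. length ys = Suc j \<longrightarrow> theta_val P ys = 0) \<Longrightarrow> diffop phi j P"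
proof (induction j arbitrary: P)
  case 0
  have "\<forall>x. P x = P 1 * x"
  proof
    fix x
    have "theta_val P [x] = 0" using 0 by auto
    then show "P x = P 1 * x" using theta_snoc[of P "[]" x] by (simp add: theta_nil algebra_simps)
  qed
  then show ?case unfolding diffop0_iff by blast
next
  case (Suc j)
  have "klin phi P" using Suc.prems(1) by simp
  moreover have "diffop phi j (\<lambda>x. P (a * x) - a * P x)" for a
  proof (rule Suc.IH)
    show "diffop phi (Suc j) (\<lambda>x. P (a * x) - a * P x)" using Suc.prems(1) by simp
    show "\<forall>ys. length ys = Suc j \<longrightarrow> theta_val (\<lambda>x. P (a * x) - a * P x) ys = 0"
      using Suc.prems(2) by (auto simp: theta_snoc[symmetric])
  qed
  ultimately show ?case by simp
qed

lemma kder_last: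
  assumes P: "diffop phi (Suc n) P" and len: "length zs = n"
  shows "kder phi (\<lambda>y. theta_val P (zs @ [y]))"
proof -
  have kl: "klin phi P" using P diffop_klin by blast
  have add: "\<And>x y. P (x + y) = P x + P y" and sc: "\<And>c x. P (phi c * x) = phi c * P x"
    using kl by (auto simp: klin_def)
  define C where "C y = (\<lambda>w. P (y*w) - y * P w)" for y
  have eq: "(\<lambda>y. theta_val P (zs @ [y])) = (\<lambda>y. theta_val (C y) zs)"
    by (simp add: theta_snoc C_def)
  have ad: "theta_val (C (y + y')) zs = theta_val (C y) zs + theta_val (C y') zs" for y y'
  proof -
    have "C (y + y') = (\<lambda>w. C y w + C y' w)"
      by (simp add: C_def fun_eq_iff algebra_simps add)
    then show ?thesis by (simp add: theta_add)
  qed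
  have scl: "theta_val (C (phi c * y)) zs = phi c * theta_val (C y) zs" for c y
  proof -
    have "C (phi c * y) = (\<lambda>w. phi c * C y w)"
      by (simp add: C_def fun_eq_iff algebra_simps sc[symmetric] mult.assoc)
    then show ?thesis by (simp add: theta_cmul)
  qed
  have lb: "theta_val (C (y * y')) zs = y * theta_val (C y') zs + y' * theta_val (C y) zs" for y y'
  proof -
    have eqC: "C (y * y') = (\<lambda>w. (C y (y' * w) - y' * C y w) + (y' * C y w + y * C y' w))"
      by (simp add: C_def fun_eq_iff algebra_simps)
    have z: "theta_val (\<lambda>w. C y (y' * w) - y' * C y w) zs = 0"
    proof -
      have "theta_val (\<lambda>w. C y (y' * w) - y' * C y w) zs = theta_val (C y) (zs @ [y'])"
        by (simp add: theta_snoc)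
      moreover have "diffop phi n (C y)" using P by (simp add: C_def)
      ultimately show ?thesis using theta_F1[of phi n "C y" "zs @ [y']"] len by simp
    qed
    have "theta_val (C (y * y')) zs = theta_val (\<lambda>w. (C y (y' * w) - y' * C y w) + (y' * C y w + y * C y' w)) zs"
      by (subst eqC) (rule refl)
    also have "\<dots> = theta_val (\<lambda>w. C y (y' * w) - y' * C y w) zs + (y' * theta_val (C y) zs + y * theta_val (C y') zs)"
      by (simp only: theta_add theta_cmul)
    finally show ?thesis using z by (simp add: algebra_simps)
  qed
  show ?thesis unfolding eq kder_def klin_def using ad scl lb by auto
qed

lemma kder_slot:
  assumes P: "diffop phi n P" and len: "length xs = n" and i: "i < n"
  shows "kder phi (\<lambda>y. theta_val P (xs[i := y]))"
proof -
  obtain m where n: "n = Suc m" using i by (cases n) auto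
  define zs where "zs = take i xs @ drop (Suc i) xs"
  have lz: "length zs = m" using len i n by (simp add: zs_def)
  have ms: "mset (xs[i := y]) = mset (zs @ [y])" for y
  proof -
    have "mset xs = mset (take i xs @ xs ! i # drop (Suc i) xs)"
      using id_take_nth_drop[of i xs] i len by simp
    then have "mset xs - {#xs ! i#} = mset zs" by (simp add: zs_def)
    then show ?thesis using mset_update[of i xs y] i len by simp
  qed
  then have "(\<lambda>y. theta_val P (xs[i := y])) = (\<lambda>y. theta_val P (zs @ [y]))"
    by (intro ext theta_perm ms)
  then show ?thesis using kder_last[of phi m P zs] P n lz by simp
qed


lemma descent:
  assumes ts: "theta_surj phi"
  shows "(\<forall>x y. \<epsilon> x y = \<epsilon> y x) \<Longrightarrow>
    (\<forall>a b c. a * \<epsilon> b c - \<epsilon> (a*b) c + \<epsilon> a (b*c) - \<epsilon> a b * c = 0) \<Longrightarrow>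
    (\<forall>x. diffop phi j (\<epsilon> x)) \<Longrightarrow>
    \<exists>Q. diffop phi (Suc j) Q \<and> (\<forall>x y. \<epsilon> x y = Q (x*y) - x * Q y - Q x * y)"
proof (induction j arbitrary: \<epsilon>)
  case 0
  have e1: "\<epsilon> x y = \<epsilon> x 1 * y" for x y
  proof -
    obtain a where "\<forall>y. \<epsilon> x y = a * y" using 0(3) by (auto simp: diffop0_iff)
    then show ?thesis by simp
  qed
  define b where "b = \<epsilon> 1 1"
  have e2: "\<epsilon> x y = b * x * y" for x y
    using e1[of x y] e1[of 1 x] 0(1) by (simp add: b_def mult.commute)
  show ?case
  proof (intro exI conjI allI)
    show "diffop phi (Suc 0) (\<lambda>y. (- b) * y)" by (rule diffop_mult)
    fix x y
    show "\<epsilon> x y = (- b) * (x * y) - x * ((- b) * y) - (- b) * x * y"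
      by (simp add: e2 algebra_simps)
  qed
next
  case (Suc j)
  note sym = Suc.prems(1) and coc = Suc.prems(2) and ord = Suc.prems(3)
  have comm: "\<epsilon> x (y*z) - y * \<epsilon> x z = \<epsilon> y (x*z) - x * \<epsilon> y z" for x y z
  proof -
    have c1: "x * \<epsilon> y z - \<epsilon> (x*y) z + \<epsilon> x (y*z) - \<epsilon> x y * z = 0" using coc by blast
    have c2: "y * \<epsilon> x z - \<epsilon> (y*x) z + \<epsilon> y (x*z) - \<epsilon> y x * z = 0" using coc by blast
    have "\<epsilon> y x = \<epsilon> x y" using sym by blast
    with c1 c2 show ?thesis by (simp add: mult.commute algebra_simps)
  qed
  define H where "H xs = theta_val (\<epsilon> (last xs)) (butlast xs)" for xs
  have Hsnoc: "H (zs @ [x]) = theta_val (\<epsilon> x) zs" for zs x by (simp add: H_def)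
  have Hperm: "H ys = H xs" if hp: "mset ys = mset xs" "length xs = Suc (Suc j)" for xs ys
  proof -
    have ly: "length ys = Suc (Suc j)" using hp mset_eq_length by metis
    obtain bx x where xs: "xs = bx @ [x]" using hp(2) by (cases xs rule: rev_cases) auto
    obtain by' y where ys: "ys = by' @ [y]" using ly by (cases ys rule: rev_cases) auto
    have m: "add_mset y (mset by') = add_mset x (mset bx)" using hp(1) xs ys by simp
    show ?thesis
    proof (cases "x = y")
      case True
      then have "mset by' = mset bx" using m by simp
      then have "theta_val (\<epsilon> x) by' = theta_val (\<epsilon> x) bx" by (rule theta_perm)
      then show ?thesis using xs ys True by (simp add: Hsnoc)
    next
      case False
      have "y \<in># add_mset x (mset bx)" unfolding m[symmetric] by simp
      then have yin: "y \<in> set bx" using False by simp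
      define zs where "zs = remove1 y bx"
      have mb: "mset bx = mset (zs @ [y])" using perm_remove[OF yin] by (simp add: zs_def)
      have mby: "mset by' = mset (zs @ [x])" using m mb
        by (simp add: add_mset_commute)
      have "theta_val (\<epsilon> x) bx = theta_val (\<epsilon> x) (zs @ [y])" using mb by (rule theta_perm)
      then have "H xs = theta_val (\<epsilon> x) (zs @ [y])" using xs by (simp add: Hsnoc)
      also have "\<dots> = theta_val (\<lambda>w. \<epsilon> x (y*w) - y * \<epsilon> x w) zs" by (simp add: theta_snoc)
      also have "(\<lambda>w. \<epsilon> x (y*w) - y * \<epsilon> x w) = (\<lambda>w. \<epsilon> y (x*w) - x * \<epsilon> y w)"
        using comm by auto
      also have "theta_val \<dots> zs = theta_val (\<epsilon> y) (zs @ [x])" by (simp add: theta_snoc)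
      also have "\<dots> = theta_val (\<epsilon> y) by'" using mby[symmetric] by (rule theta_perm)
      also have "\<dots> = H ys" using ys by (simp add: Hsnoc)
      finally show ?thesis by simp
    qed
  qed
  have Hslot: "kder phi (\<lambda>y. H (xs[i := y]))" if hs: "length xs = Suc (Suc j)" "i < Suc j" for xs i
  proof -
    obtain bx x where xs: "xs = bx @ [x]" using hs(1) by (cases xs rule: rev_cases) auto
    have lb: "length bx = Suc j" using hs xs by simp
    have "(\<lambda>y. H (xs[i := y])) = (\<lambda>y. theta_val (\<epsilon> x) (bx[i := y]))"
      using xs hs lb by (simp add: list_update_append1 Hsnoc)
    then show ?thesis using kder_slot[of phi "Suc j" "\<epsilon> x" bx i] ord lb hs by simp
  qed
  have Hlast: "kder phi (\<lambda>y. H (xs[Suc j := y]))" if hl: "length xs = Suc (Suc j)" for xs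
  proof -
    obtain a rest where xs: "xs = a # rest" using hl by (cases xs) auto
    have lr: "length rest = Suc j" using hl xs by simp
    define ws where "ws = a # rest[j := a]"
    have lw: "length ws = Suc (Suc j)" using lr by (simp add: ws_def)
    have "H (xs[Suc j := y]) = H (ws[0 := y])" for y
    proof (rule Hperm)
      show "length (ws[0 := y]) = Suc (Suc j)" using lw by simp
      show "mset (xs[Suc j := y]) = mset (ws[0 := y])"
        using lr by (simp add: xs ws_def mset_update add_mset_commute)
    qed
    then have "(\<lambda>y. H (xs[Suc j := y])) = (\<lambda>y. H (ws[0 := y]))" by auto
    then show ?thesis using Hslot[OF lw, of 0] by simp
  qed
  have smd: "sym_multider phi (Suc (Suc j)) H"
    unfolding sym_multider_def
    apply (intro conjI allI impI)
    subgoal using Hperm by blast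
    subgoal for xs i using Hslot Hlast by (cases "i = Suc j") auto
    done
  obtain R where R: "diffop phi (Suc (Suc j)) R"
    and Rt: "\<forall>xs. length xs = Suc (Suc j) \<longrightarrow> theta_val R xs = H xs"
    using ts[unfolded theta_surj_def, rule_format, OF smd] by blast
  define \<epsilon>' where "\<epsilon>' x y = \<epsilon> x y - ((R (x*y) - x * R y) - R x * y)" for x y
  have sym': "\<forall>x y. \<epsilon>' x y = \<epsilon>' y x" using sym by (simp add: \<epsilon>'_def mult.commute)
  have coc': "\<forall>a b c. a * \<epsilon>' b c - \<epsilon>' (a*b) c + \<epsilon>' a (b*c) - \<epsilon>' a b * c = 0"
  proof (intro allI)
    fix a b c
    have "a * \<epsilon>' b c - \<epsilon>' (a*b) c + \<epsilon>' a (b*c) - \<epsilon>' a b * c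
       = a * \<epsilon> b c - \<epsilon> (a*b) c + \<epsilon> a (b*c) - \<epsilon> a b * c"
      by (simp add: \<epsilon>'_def algebra_simps)
    then show "a * \<epsilon>' b c - \<epsilon>' (a*b) c + \<epsilon>' a (b*c) - \<epsilon>' a b * c = 0" using coc by simp
  qed
  have ord': "\<forall>x. diffop phi j (\<epsilon>' x)"
  proof
    fix x
    have Rc: "diffop phi (Suc j) (\<lambda>y. R (x*y) - x * R y)" using R by simp
    have d: "diffop phi (Suc j) (\<epsilon>' x)"
      unfolding \<epsilon>'_def
      using diffop_diff[OF ord[rule_format, of x] diffop_diff[OF Rc diffop_mult[of phi "Suc j" "R x"]]]
      by (simp add: mult.commute)
    have "theta_val (\<epsilon>' x) ys = 0" if ly: "length ys = Suc j" for ys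
    proof -
      have t1: "theta_val (\<lambda>y. R (x*y) - x * R y) ys = theta_val (\<epsilon> x) ys"
        using Rt ly by (simp add: theta_snoc[symmetric] Hsnoc)
      have t2: "theta_val (\<lambda>y. R x * y) ys = 0"
        using theta_F1'[OF diffop_mult[of phi 0 "R x"], of ys] ly by simp
      have "theta_val (\<epsilon>' x) ys = theta_val (\<epsilon> x) ys - (theta_val (\<lambda>y. R (x*y) - x * R y) ys - theta_val (\<lambda>y. R x * y) ys)"
        unfolding \<epsilon>'_def by (simp only: theta_diff)
      then show ?thesis using t1 t2 by simp
    qed
    then show "diffop phi j (\<epsilon>' x)" using theta_F2[OF d] by blast
  qed
  obtain Q' where Q': "diffop phi (Suc j) Q'" and eQ: "\<forall>x y. \<epsilon>' x y = Q' (x*y) - x * Q' y - Q' x * y"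
    using Suc.IH[OF sym' coc' ord'] by blast
  show ?case
  proof (intro exI conjI allI)
    show "diffop phi (Suc (Suc j)) (\<lambda>y. Q' y + R y)"
      using diffop_add[OF diffop_mono1[OF Q'] R] .
    fix x y
    have "\<epsilon> x y = \<epsilon>' x y + ((R (x*y) - x * R y) - R x * y)" by (simp add: \<epsilon>'_def)
    then show "\<epsilon> x y = Q' (x*y) + R (x*y) - x * (Q' y + R y) - (Q' x + R x) * y"
      using eQ by (simp add: algebra_simps)
  qed
qed


definition good :: "('k::comm_ring_1 \<Rightarrow> 'a::comm_ring_1) \<Rightarrow> nat \<Rightarrow> (nat \<Rightarrow> 'a \<Rightarrow> 'a) \<Rightarrow> bool" where
  "good phi m D \<longleftrightarrow> D 0 = id \<and> (\<forall>i\<le>m. diffop phi i (D i)) \<and>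
     (\<forall>i\<le>m. \<forall>x y. D i (x*y) = (\<Sum>r\<le>i. D r x * D (i-r) y))"

lemma fps_key:
  fixes f g h :: "'a::comm_ring_1 fps"
  assumes "\<forall>i\<le>m. fps_nth f (i) = fps_nth g (i)"
  shows "fps_nth (f*h) (Suc m) = fps_nth (g*h) (Suc m) + (fps_nth f (Suc m) - fps_nth g (Suc m)) * fps_nth h (0)"
proof -
  have s: "(\<Sum>i=0..m. fps_nth f (i) * fps_nth h ((Suc m - i))) = (\<Sum>i=0..m. fps_nth g (i) * fps_nth h ((Suc m - i)))"
    using assms by (intro sum.cong) auto
  show ?thesis unfolding fps_mult_nth sum.atLeast0_atMost_Suc s
    by (simp add: algebra_simps)
qed

lemma step:
  assumes ts: "theta_surj phi" and m1: "1 \<le> m" and g: "good phi m D"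
  shows "\<exists>E. good phi (Suc m) (D(Suc m := E))"
proof -
  have D0: "D 0 = id" and Dord: "\<And>i. i \<le> m \<Longrightarrow> diffop phi i (D i)"
    and Dl: "\<And>i x y. i \<le> m \<Longrightarrow> D i (x*y) = (\<Sum>r\<le>i. D r x * D (i-r) y)"
    using g by (auto simp: good_def)
  define Ef where "Ef x = Abs_fps (\<lambda>i. if i \<le> m then D i x else 0)" for x
  define c where "c x y = fps_nth (Ef x * Ef y) (Suc m)" for x y
  have Ef_nth: "fps_nth (Ef x) (i) = (if i \<le> m then D i x else 0)" for x i by (simp add: Ef_def)
  have c_sum: "c x y = (\<Sum>r\<in>{1..m}. D r x * D (Suc m - r) y)" for x y
  proof -
    let ?f = "\<lambda>i. fps_nth (Ef x) (i) * fps_nth (Ef y) ((Suc m - i))"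
    have "c x y = (\<Sum>i=0..Suc m. ?f i)" by (simp add: c_def fps_mult_nth)
    also have "\<dots> = ?f 0 + (\<Sum>i=Suc 0..Suc m. ?f i)" by (rule sum.atLeast_Suc_atMost) simp
    also have "(\<Sum>i=Suc 0..Suc m. ?f i) = (\<Sum>i=1..m. ?f i) + ?f (Suc m)"
      using m1 by (simp add: sum.cl_ivl_Suc)
    also have "(\<Sum>i=1..m. ?f i) = (\<Sum>r\<in>{1..m}. D r x * D (Suc m - r) y)"
      by (intro sum.cong) (auto simp: Ef_nth)
    finally show ?thesis by (simp add: Ef_nth)
  qed
  have csym: "c x y = c y x" for x y by (simp add: c_def mult.commute)
  have low: "\<forall>i\<le>m. fps_nth (Ef x * Ef y) (i) = fps_nth (Ef (x*y)) (i)" for x y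
  proof (intro allI impI)
    fix n assume n: "n \<le> m"
    have "fps_nth (Ef x * Ef y) (n) = (\<Sum>r=0..n. D r x * D (n-r) y)"
      unfolding fps_mult_nth using n by (intro sum.cong) (auto simp: Ef_nth)
    also have "\<dots> = fps_nth (Ef (x*y)) (n)" using n Dl[of n x y] by (simp add: Ef_nth atLeast0AtMost)
    finally show "fps_nth (Ef x * Ef y) (n) = fps_nth (Ef (x*y)) (n)" .
  qed
  have Ef0: "fps_nth (Ef z) (0) = z" for z using D0 by (simp add: Ef_nth)
  have EfS: "fps_nth (Ef z) (Suc m) = 0" for z by (simp add: Ef_nth)
  have cid: "c (x*y) z + c x y * z = c (y*z) x + c y z * x" for x y z
  proof -
    have "fps_nth ((Ef x * Ef y) * Ef z) (Suc m) = c (x*y) z + c x y * z"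
      using fps_key[OF low[of x y], of "Ef z"] by (simp add: c_def Ef0 EfS)
    moreover have "fps_nth ((Ef y * Ef z) * Ef x) (Suc m) = c (y*z) x + c y z * x"
      using fps_key[OF low[of y z], of "Ef x"] by (simp add: c_def Ef0 EfS)
    moreover have "((Ef x * Ef y) * Ef z) = ((Ef y * Ef z) * Ef x)" by (simp add: ac_simps)
    ultimately show ?thesis by simp
  qed
  define \<epsilon> where "\<epsilon> x y = - c x y" for x y
  have sym: "\<forall>x y. \<epsilon> x y = \<epsilon> y x" using csym by (simp add: \<epsilon>_def)
  have coc: "\<forall>a b d. a * \<epsilon> b d - \<epsilon> (a*b) d + \<epsilon> a (b*d) - \<epsilon> a b * d = 0"
  proof (intro allI)
    fix a b d
    have "c (a*b) d + c a b * d = c (b*d) a + c b d * a" by (rule cid)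
    moreover have "c (b*d) a = c a (b*d)" by (rule csym)
    ultimately show "a * \<epsilon> b d - \<epsilon> (a*b) d + \<epsilon> a (b*d) - \<epsilon> a b * d = 0"
      by (simp add: \<epsilon>_def algebra_simps)
  qed
  have ord: "\<forall>x. diffop phi m (\<epsilon> x)"
  proof
    fix x
    have "diffop phi m (\<lambda>y. - (\<Sum>r\<in>{1..m}. D r x * D (Suc m - r) y))"
      by (intro diffop_neg diffop_sum finite_atLeastAtMost diffop_cmul)
         (auto intro: diffop_mono[OF Dord])
    then show "diffop phi m (\<epsilon> x)" by (rule diffop_cong) (simp add: \<epsilon>_def c_sum)
  qed
  obtain Q where Q: "diffop phi (Suc m) Q" and eQ: "\<forall>x y. \<epsilon> x y = Q (x*y) - x * Q y - Q x * y"
    using descent[OF ts sym coc ord] by blast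
  define E where "E y = - Q y" for y
  let ?D = "D(Suc m := E)"
  have "good phi (Suc m) ?D"
    unfolding good_def
  proof (intro conjI allI impI)
    show "?D 0 = id" using D0 by simp
  next
    fix i assume i: "i \<le> Suc m"
    show "diffop phi i (?D i)"
    proof (cases "i = Suc m")
      case True
      then show ?thesis using diffop_neg[OF Q] by (simp add: E_def[abs_def])
    next
      case False
      then show ?thesis using i Dord by simp
    qed
  next
    fix i x y assume i: "i \<le> Suc m"
    show "?D i (x*y) = (\<Sum>r\<le>i. ?D r x * ?D (i-r) y)"
    proof (cases "i = Suc m")
      case False
      then have im: "i \<le> m" using i by simp
      have "(\<Sum>r\<le>i. ?D r x * ?D (i-r) y) = (\<Sum>r\<le>i. D r x * D (i-r) y)"
        using im by (intro sum.cong) auto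
      then show ?thesis using Dl[OF im] False by simp
    next
      case True
      let ?g = "\<lambda>r. ?D r x * ?D (Suc m - r) y"
      have "(\<Sum>r\<le>Suc m. ?g r) = (\<Sum>r\<le>m. ?g r) + ?g (Suc m)" by simp
      also have "(\<Sum>r\<le>m. ?g r) = ?g 0 + (\<Sum>r=Suc 0..m. ?g r)"
        unfolding atMost_atLeast0 by (rule sum.atLeast_Suc_atMost) simp
      also have "(\<Sum>r=Suc 0..m. ?g r) = c x y"
        unfolding c_sum by (intro sum.cong) auto
      finally have "(\<Sum>r\<le>Suc m. ?g r) = x * E y + c x y + E x * y" using D0 by simp
      moreover have "E (x*y) = x * E y + c x y + E x * y"
        using eQ by (simp add: E_def \<epsilon>_def algebra_simps)
      ultimately show ?thesis using True by simp
    qed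
  qed
  then show ?thesis by blast
qed

theorem mainTheorem13:
  fixes phi :: "'k::comm_ring_1 \<Rightarrow> 'a::comm_ring_1"
  assumes "alg_struct phi"
    and "theta_surj phi"
  shows "{\<delta>. ider phi \<delta>} = {\<delta>. kder phi \<delta>}"
proof (intro set_eqI iffI; simp)
  fix \<delta> assume "ider phi \<delta>"
  then show "kder phi \<delta>" by (simp add: ider_def)
next
  fix \<delta> assume kd: "kder phi \<delta>"
  have kl: "klin phi \<delta>" and lb: "\<And>x y. \<delta> (x*y) = x * \<delta> y + y * \<delta> x"
    using kd by (auto simp: kder_def)
  define D1 :: "nat \<Rightarrow> 'a \<Rightarrow> 'a" where "D1 i = (if i = 0 then id else if i = 1 then \<delta> else (\<lambda>x. 0))" for i
  have g1: "good phi 1 D1"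
    unfolding good_def
  proof (intro conjI allI impI)
    show "D1 0 = id" by (simp add: D1_def)
  next
    fix i :: nat assume "i \<le> 1"
    then consider "i = 0" | "i = 1" by linarith
    then show "diffop phi i (D1 i)"
    proof cases
      case 1 then show ?thesis by (auto simp: D1_def diffop0_iff intro: exI[of _ 1])
    next
      case 2
      have "diffop phi 0 (\<lambda>x. \<delta> (a * x) - a * \<delta> x)" for a
        unfolding diffop0_iff by (rule exI[of _ "\<delta> a"]) (simp add: lb algebra_simps)
      then show ?thesis using 2 kl by (simp add: D1_def)
    qed
  next
    fix i :: nat and x y assume "i \<le> 1"
    then consider "i = 0" | "i = 1" by linarith
    then show "D1 i (x*y) = (\<Sum>r\<le>i. D1 r x * D1 (i-r) y)"
    proof cases
      case 1 then show ?thesis by (simp add: D1_def)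
    next
      case 2 then show ?thesis by (simp add: D1_def lb algebra_simps)
    qed
  qed
  obtain F where F: "\<And>m D. 1 \<le> m \<Longrightarrow> good phi m D \<Longrightarrow> good phi (Suc m) (D(Suc m := F m D))"
    using step[OF assms(2)] by metis
  define seq where "seq = rec_nat D1 (\<lambda>m S. S(Suc (Suc m) := F (Suc m) S))"
  have seq0: "seq 0 = D1" and seqS: "seq (Suc m) = (seq m)(Suc (Suc m) := F (Suc m) (seq m))" for m
    by (simp_all add: seq_def)
  have gs: "good phi (Suc m) (seq m)" for m
  proof (induction m)
    case 0 then show ?case using g1 seq0 by simp
  next
    case (Suc m) show ?case unfolding seqS by (rule F) (simp_all add: Suc.IH)
  qed
  have agree: "r \<le> Suc m \<Longrightarrow> seq m r = seq (m + k) r" for r m k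
    by (induction k) (auto simp: seqS)
  define Dn where "Dn i = seq i i" for i
  have Dn_eq: "r \<le> i \<Longrightarrow> seq i r = Dn r" for r i
    using agree[of r r "i - r"] by (simp add: Dn_def)
  show "ider phi \<delta>"
    unfolding ider_def
  proof (intro conjI exI[of _ Dn] allI)
    show "kder phi \<delta>" by (rule kd)
    show "Dn 0 = id" using seq0 by (simp add: Dn_def D1_def)
    show "Dn 1 = \<delta>" using agree[of 1 0 1] seq0 by (simp add: Dn_def D1_def)
  next
    fix i
    show "klin phi (Dn i)"
    proof -
      have "diffop phi i (seq i i)" using gs[of i] by (simp add: good_def)
      then show ?thesis unfolding Dn_def by (rule diffop_klin)
    qed
  next
    fix i and x y :: 'a
    have "Dn i (x*y) = seq i i (x*y)" by (simp add: Dn_def)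
    also have "\<dots> = (\<Sum>r\<le>i. seq i r x * seq i (i-r) y)"
      using gs[of i] by (simp add: good_def)
    also have "\<dots> = (\<Sum>r\<le>i. Dn r x * Dn (i-r) y)"
      by (rule sum.cong) (simp_all add: Dn_eq)
    finally show "Dn i (x*y) = (\<Sum>r\<le>i. Dn r x * Dn (i-r) y)" .
  qed
qed

end
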